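(* Let $M \neq \{0\}$ be a semiideal of $\mathbb{N}_0$ and let $d$ be the period of $M$. If $a, b \in M$, $a \neq 0$, and $a + d = b$, then $d$ divides $a$.
   Context: $\mathbb{N}_0$ is the semiring of natural numbers including $0$. A semiideal of $\mathbb{N}_0$ is a nonempty subset closed under addition and multiplication by elements of $\mathbb{N}_0$. For a semiideal $M\neq 0$, an element $e \in \mathbb{N}=\mathbb{N}_0\setminus\{0\}$ is a difference of $M$ if there are $x,y\in M$, $x\neq 0$, with $x+e=y$; the period of $M$ is the minimal difference. *)

theory Defs
  imports Main
begin

definition semiideal :: "nat set \<Rightarrow> bool" where
  "semiideal M \<longleftrightarrow> M \<noteq> {} \<and> (\<forall>x\<in>M. \<forall>y\<in>M. x + y \<in> M) \<and> (\<forall>r. \<forall>x\<in>M. r * x \<in> M)"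

definition is_difference :: "nat set \<Rightarrow> nat \<Rightarrow> bool" where
  "is_difference M e \<longleftrightarrow> e \<noteq> 0 \<and> (\<exists>x\<in>M. \<exists>y\<in>M. x \<noteq> 0 \<and> x + e = y)"

definition period :: "nat set \<Rightarrow> nat" where
  "period M = (LEAST e. is_difference M e)"

end

theory Submission
  imports Defs
begin

theorem lemma4p3:
  fixes M :: "nat set" and a b d :: nat
  assumes "semiideal M" and "M \<noteq> {0}"
    and "d = period M"
    and "a \<in> M" and "b \<in> M" and "a \<noteq> 0" and "a + d = b"
  shows "d dvd a"
proof -
  have mul: "\<And>r x. x \<in> M \<Longrightarrow> r * x \<in> M" using assms(1) unfolding semiideal_def by blast
  have "2 * a \<in> M" using mul assms(4) by blast
  hence da: "is_difference M a" unfolding is_difference_def using assms(4,6) by (intro conjI bexI[of _ a] bexI[of _ "2*a"]) auto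
  hence dd: "is_difference M d" unfolding assms(3) period_def by (rule LeastI)
  have mn: "\<And>e. is_difference M e \<Longrightarrow> d \<le> e" unfolding assms(3) period_def by (rule Least_le)
  have d0: "d \<noteq> 0" using dd unfolding is_difference_def by auto
  define q r where "q = a div d" and "r = a mod d"
  have a_eq: "a = q * d + r" unfolding q_def r_def by simp
  have rd: "r < d" unfolding r_def using d0 by simp
  show ?thesis
  proof (rule ccontr)
    assume "\<not> d dvd a"
    hence r0: "r \<noteq> 0" unfolding r_def by (simp add: dvd_eq_mod_eq_0)
    show False
    proof (cases "q = 0")
      case True
      then have "a < d" using a_eq rd by simp
      with mn[OF da] show False by simp
    next
      case False
      have x: "q * b \<in> M" "(q+1) * a \<in> M" using mul assms(4,5) by blast+
      have "q * b \<noteq> 0" using False assms(6,7) by simp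
      moreover have "q * b + r = (q+1) * a"
      proof -
        have "q * b + r = q * a + q * d + r" using assms(7)[symmetric] by (simp add: algebra_simps)
        also have "\<dots> = q * a + a" using a_eq by simp
        finally show ?thesis by (simp add: algebra_simps)
      qed
      ultimately have "is_difference M r" unfolding is_difference_def using x r0 by blast
      with mn rd show False by fastforce
    qed
  qed
qed

end
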